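(* Let $A(\underline{y})$ and $B(\underline{y})$ be smooth $\mathbb{R}_{0,m}$-valued functions depending only on $\underline{y}$. The function $$F(X)=\exp(z)A(\underline{y})+\exp(\overline{z})B(\underline{y})$$ is two-sided monogenic if and only if $A$ is harmonic and satisfies $A+e_1Ae_1+A\partial_{\underline{y}}=0$, and $B$ is a left monogenic function (i.e. $\partial_{\underline{y}}B=0$) of the form $B=-\frac{1}{2}\partial_{\underline{y}}A$. In particular, if $M(\underline{y})$ is a right monogenic function of $\underline{y}$ (i.e. $M\partial_{\underline{y}}=0$), then $$\exp(z)\big(M(\underline{y})-e_1M(\underline{y})e_1\big)-\frac{1}{2}\exp(\overline{z})\big(\partial_{\underline{y}}M(\underline{y})+e_1\partial_{\underline{y}}M(\underline{y})e_1\big)$$ is two-sided monogenic.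
   Context: Let $m\ge 2$ and let $\mathbb{R}_{0,m}$ be the real Clifford algebra generated by $e_1,\dots,e_m$ with $e_i^2=-1$ and $e_ie_j=-e_je_i$ for $i\neq j$; all products are Clifford products. Identify $(x_0,\dots,x_m)\in\mathbb{R}^{m+1}$ with $X=x_0+\sum_{j=1}^m x_je_j$, and write $z=x_0+x_1e_1$, $\overline{z}=x_0-x_1e_1$, $\underline{y}=\sum_{j=2}^m x_je_j$ (identified with $(x_2,\dots,x_m)\in\mathbb{R}^{m-1}$). The subalgebra spanned by $1,e_1$ is identified with $\mathbb{C}$ via $i\mapsto e_1$, so $\exp(z)=e^{x_0}(\cos x_1+e_1\sin x_1)$ and $\exp(\overline{z})=e^{x_0}(\cos x_1-e_1\sin x_1)$. Operators: $\partial_X f=\partial_{x_0}f+\sum_{j=1}^m e_j\partial_{x_j}f$, $f\partial_X=\partial_{x_0}f+\sum_{j=1}^m(\partial_{x_j}f)e_j$, $\partial_{\underline{y}}f=\sum_{j=2}^m e_j\partial_{x_j}f$, $f\partial_{\underline{y}}=\sum_{j=2}^m(\partial_{x_j}f)e_j$. A function $f$ is left monogenic if $\partial_Xf=0$, right monogenic if $f\partial_X=0$, two-sided monogenic if both hold; for functions of $\underline{y}$ alone, left/right monogenic means $\partial_{\underline{y}}f=0$ / $f\partial_{\underline{y}}=0$. Harmonic means $\Delta A=0$ where $\Delta=\sum_{j=2}^m\partial_{x_j}^2=-\partial_{\underline{y}}^2$. *)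

theory Defs
  imports "HOL-Analysis.Analysis" "HOL-Library.Option_ord"
begin

text \<open>The generators of R_{0,m} are indexed by the type 'k option,
  where None stands for e_1 and Some k (k :: 'k) stand for e_2,...,e_m; the order
  is None < Some k. Thus m = CARD('k) + 1 >= 2. A Clifford number is a real vector
  indexed by the subsets S of generators (coefficient of the blade e_S, generators
  multiplied in increasing order; the empty blade is 1).\<close>

type_synonym 'k clif = "real ^ ('k option set)"

definition blade_sign :: "('k::linorder) option set \<Rightarrow> 'k option set \<Rightarrow> real" where
  "blade_sign S T = (-1) ^ (card {(s,t). s \<in> S \<and> t \<in> T \<and> t < s} + card (S \<inter> T))"

definition clmul :: "('k::{finite,linorder}) clif \<Rightarrow> 'k clif \<Rightarrow> 'k clif" (infixl "\<odot>" 70) where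
  "a \<odot> b = (\<chi> C. \<Sum>S\<in>UNIV. \<Sum>T\<in>UNIV.
      if (S - T) \<union> (T - S) = C then blade_sign S T * (a $ S) * (b $ T) else 0)"

definition clsc :: "real \<Rightarrow> ('k::finite) clif" where
  "clsc r = (\<chi> C. if C = {} then r else 0)"

definition gen :: "('k::finite) option \<Rightarrow> 'k clif" where
  "gen i = (\<chi> C. if C = {i} then 1 else 0)"

text \<open>exp(z) and exp(conj z) with z = x0 + x1 e_1\<close>
definition exp_z :: "real \<Rightarrow> real \<Rightarrow> ('k::finite) clif" where
  "exp_z x0 x1 = exp x0 *\<^sub>R (clsc (cos x1) + sin x1 *\<^sub>R gen None)"

definition exp_zbar :: "real \<Rightarrow> real \<Rightarrow> ('k::finite) clif" where
  "exp_zbar x0 x1 = exp x0 *\<^sub>R (clsc (cos x1) - sin x1 *\<^sub>R gen None)"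

definition pd :: "('a::real_normed_vector \<Rightarrow> 'b::real_normed_vector) \<Rightarrow> 'a \<Rightarrow> 'a \<Rightarrow> 'b" where
  "pd f p d = vector_derivative (\<lambda>t. f (p + t *\<^sub>R d)) (at 0)"

fun iter_pd :: "('a::real_normed_vector \<Rightarrow> 'b::real_normed_vector) \<Rightarrow> 'a list \<Rightarrow> 'a \<Rightarrow> 'b" where
  "iter_pd f [] = f"
| "iter_pd f (d # ds) = (\<lambda>x. pd (iter_pd f ds) x d)"

definition smooth :: "('a::real_normed_vector \<Rightarrow> 'b::real_normed_vector) \<Rightarrow> bool" where
  "smooth f \<longleftrightarrow> (\<forall>ds x. continuous (at x) (iter_pd f ds) \<and>
       (\<forall>d. (\<lambda>t. iter_pd f ds (x + t *\<^sub>R d)) differentiable (at 0)))"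

text \<open>Operators on functions of y = (x_2,...,x_m) :: (real, 'k) vec\<close>
definition dy :: "('k::{finite,linorder}) \<Rightarrow> ((real, 'k) vec \<Rightarrow> 'k clif) \<Rightarrow> (real, 'k) vec \<Rightarrow> 'k clif" where
  "dy k f y = pd f y (axis k (1::real))"

definition left_dirac_y :: "((real, 'k::{finite,linorder}) vec \<Rightarrow> 'k clif) \<Rightarrow> (real, 'k) vec \<Rightarrow> 'k clif" where
  "left_dirac_y f y = (\<Sum>k\<in>UNIV. gen (Some k) \<odot> dy k f y)"

definition right_dirac_y :: "((real, 'k::{finite,linorder}) vec \<Rightarrow> 'k clif) \<Rightarrow> (real, 'k) vec \<Rightarrow> 'k clif" where
  "right_dirac_y f y = (\<Sum>k\<in>UNIV. dy k f y \<odot> gen (Some k))"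

definition harmonic :: "((real, 'k::{finite,linorder}) vec \<Rightarrow> 'k clif) \<Rightarrow> bool" where
  "harmonic f \<longleftrightarrow> (\<forall>y. (\<Sum>k\<in>UNIV. dy k (dy k f) y) = 0)"

definition left_dirac :: "(real \<times> real \<times> (real, 'k::{finite,linorder}) vec \<Rightarrow> 'k clif) \<Rightarrow> real \<times> real \<times> (real, 'k) vec \<Rightarrow> 'k clif" where
  "left_dirac F p = pd F p (1, 0, 0) + gen None \<odot> pd F p (0, 1, 0)
     + (\<Sum>k\<in>UNIV. gen (Some k) \<odot> pd F p (0, 0, axis k 1))"

definition right_dirac :: "(real \<times> real \<times> (real, 'k::{finite,linorder}) vec \<Rightarrow> 'k clif) \<Rightarrow> real \<times> real \<times> (real, 'k) vec \<Rightarrow> 'k clif" where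
  "right_dirac F p = pd F p (1, 0, 0) + pd F p (0, 1, 0) \<odot> gen None
     + (\<Sum>k\<in>UNIV. pd F p (0, 0, axis k 1) \<odot> gen (Some k))"

definition two_sided_monogenic :: "(real \<times> real \<times> (real, 'k::{finite,linorder}) vec \<Rightarrow> 'k clif) \<Rightarrow> bool" where
  "two_sided_monogenic F \<longleftrightarrow> (\<forall>p. left_dirac F p = 0) \<and> (\<forall>p. right_dirac F p = 0)"

end

theory Submission
  imports Defs
begin


definition bl :: "('k::finite) option set \<Rightarrow> 'k clif" where
  "bl S = (\<chi> C. if C = S then 1 else 0)"

abbreviation sd :: "'a set \<Rightarrow> 'a set \<Rightarrow> 'a set" where
  "sd S T \<equiv> (S - T) \<union> (T - S)"

lemma bl_nth: "bl S $ C = (if C = S then 1 else 0)"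
  by (simp add: bl_def)

lemma vec_expand: "(a::('k::finite) clif) = (\<Sum>S\<in>UNIV. (a $ S) *\<^sub>R bl S)"
  by (simp add: vec_eq_iff sum_component bl_nth if_distrib cong: if_cong)

lemma clmul_expand:
  "a \<odot> b = (\<Sum>S\<in>UNIV. \<Sum>T\<in>UNIV. (blade_sign S T * (a $ S) * (b $ T)) *\<^sub>R bl (sd S T))"
  by (simp add: clmul_def vec_eq_iff sum_component bl_nth if_distrib eq_commute cong: if_cong)

lemma clmul_add_left: "(a + b) \<odot> c = a \<odot> c + b \<odot> c"
  by (simp add: clmul_expand algebra_simps scaleR_add_left sum.distrib)
lemma clmul_add_right: "c \<odot> (a + b) = c \<odot> a + c \<odot> b"
  by (simp add: clmul_expand algebra_simps scaleR_add_left sum.distrib)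
lemma clmul_scaleR_left: "(r *\<^sub>R a) \<odot> c = r *\<^sub>R (a \<odot> c)"
  by (simp add: clmul_expand scaleR_sum_right algebra_simps)
lemma clmul_scaleR_right: "c \<odot> (r *\<^sub>R a) = r *\<^sub>R (c \<odot> a)"
  by (simp add: clmul_expand scaleR_sum_right algebra_simps)
lemma clmul_zero_left: "0 \<odot> c = 0"
  by (simp add: clmul_expand)
lemma clmul_zero_right: "c \<odot> 0 = 0"
  by (simp add: clmul_expand)
lemma clmul_minus_left: "(- a) \<odot> c = - (a \<odot> c)"
  using clmul_scaleR_left[of "-1" a c] by simp
lemma clmul_minus_right: "c \<odot> (- a) = - (c \<odot> a)"
  using clmul_scaleR_right[of c "-1" a] by simp
lemma clmul_diff_left: "(a - b) \<odot> c = a \<odot> c - b \<odot> c"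
  using clmul_add_left[of a "-b" c] by (simp add: clmul_minus_left)
lemma clmul_diff_right: "c \<odot> (a - b) = c \<odot> a - c \<odot> b"
  using clmul_add_right[of c a "-b"] by (simp add: clmul_minus_right)
lemma clmul_sum_left: "(\<Sum>i\<in>I. f i) \<odot> c = (\<Sum>i\<in>I. f i \<odot> c)"
  by (induct I rule: infinite_finite_induct) (auto simp: clmul_zero_left clmul_add_left)
lemma clmul_sum_right: "c \<odot> (\<Sum>i\<in>I. f i) = (\<Sum>i\<in>I. c \<odot> f i)"
  by (induct I rule: infinite_finite_induct) (auto simp: clmul_zero_right clmul_add_right)

lemmas clmul_lin = clmul_add_left clmul_add_right clmul_scaleR_left clmul_scaleR_right
  clmul_zero_left clmul_zero_right clmul_minus_left clmul_minus_right clmul_diff_left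
  clmul_diff_right clmul_sum_left clmul_sum_right

lemma bl_clmul_bl: "bl S \<odot> bl T = blade_sign S T *\<^sub>R bl (sd S T)"
proof -
  have "\<And>Sa Ta. (blade_sign Sa Ta * bl S $ Sa * bl T $ Ta) *\<^sub>R bl (sd Sa Ta) = (if Ta = T then (if Sa = S then blade_sign S T *\<^sub>R bl (sd S T) else 0) else 0)"
    by (simp add: bl_nth)
  then show ?thesis by (simp add: clmul_expand)
qed

lemma clmul_bl_expand:
  "a \<odot> b = (\<Sum>S\<in>UNIV. \<Sum>T\<in>UNIV. (a $ S * b $ T) *\<^sub>R (bl S \<odot> bl T))"
  by (subst clmul_expand) (simp add: bl_clmul_bl mult_ac)

definition pinv :: "('k::linorder) set \<Rightarrow> 'k set \<Rightarrow> ('k \<times> 'k) set" where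
  "pinv S T = {(s,t). s \<in> S \<and> t \<in> T \<and> t < s}"

lemma pinv_left: "card (pinv (sd S T) U) + 2 * card (pinv (S \<inter> T) U) = card (pinv S U) + card (pinv (T::('k::{finite,linorder}) set) U)"
proof -
  have a: "pinv S U \<union> pinv T U = pinv (sd S T) U \<union> pinv (S \<inter> T) U" by (auto simp: pinv_def)
  have b: "pinv S U \<inter> pinv T U = pinv (S \<inter> T) U" by (auto simp: pinv_def)
  have c: "pinv (sd S T) U \<inter> pinv (S \<inter> T) U = {}" by (auto simp: pinv_def)
  have "card (pinv S U) + card (pinv T U) = card (pinv S U \<union> pinv T U) + card (pinv S U \<inter> pinv T U)"
    by (rule card_Un_Int) auto
  also have "\<dots> = card (pinv (sd S T) U) + card (pinv (S \<inter> T) U) + card (pinv (S \<inter> T) U)"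
    unfolding a b by (subst card_Un_disjoint) (use c in auto)
  finally show ?thesis by simp
qed

lemma pinv_right: "card (pinv S (sd T U)) + 2 * card (pinv S (T \<inter> U)) = card (pinv S T) + card (pinv (S::('k::{finite,linorder}) set) U)"
proof -
  have a: "pinv S T \<union> pinv S U = pinv S (sd T U) \<union> pinv S (T \<inter> U)" by (auto simp: pinv_def)
  have b: "pinv S T \<inter> pinv S U = pinv S (T \<inter> U)" by (auto simp: pinv_def)
  have c: "pinv S (sd T U) \<inter> pinv S (T \<inter> U) = {}" by (auto simp: pinv_def)
  have "card (pinv S T) + card (pinv S U) = card (pinv S T \<union> pinv S U) + card (pinv S T \<inter> pinv S U)"
    by (rule card_Un_Int) auto
  also have "\<dots> = card (pinv S (sd T U)) + card (pinv S (T \<inter> U)) + card (pinv S (T \<inter> U))"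
    unfolding a b by (subst card_Un_disjoint) (use c in auto)
  finally show ?thesis by simp
qed

lemma card_sd_int: "card (sd S T \<inter> U) + 2 * card (S \<inter> T \<inter> U) = card (S \<inter> U) + card (T \<inter> (U::('k::finite) set))"
proof -
  have a: "(S \<inter> U) \<union> (T \<inter> U) = (sd S T \<inter> U) \<union> (S \<inter> T \<inter> U)" by auto
  have b: "(S \<inter> U) \<inter> (T \<inter> U) = S \<inter> T \<inter> U" by auto
  have c: "(sd S T \<inter> U) \<inter> (S \<inter> T \<inter> U) = {}" by auto
  have "card (S \<inter> U) + card (T \<inter> U) = card ((S \<inter> U) \<union> (T \<inter> U)) + card ((S \<inter> U) \<inter> (T \<inter> U))"
    by (rule card_Un_Int) auto
  also have "\<dots> = card (sd S T \<inter> U) + card (S \<inter> T \<inter> U) + card (S \<inter> T \<inter> U)"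
    unfolding a b by (subst card_Un_disjoint) (use c in auto)
  finally show ?thesis by simp
qed

lemma blade_sign_pinv: "blade_sign S T = (-1) ^ (card (pinv S T) + card (S \<inter> T))"
  by (simp add: blade_sign_def pinv_def)

lemma neg1_pow_eq: "even m = even n \<Longrightarrow> (-1::real) ^ m = (-1) ^ n"
  by (metis neg_one_even_power neg_one_odd_power)

lemma sign_assoc:
  fixes S T U :: "('k::{finite,linorder}) option set"
  shows "blade_sign S T * blade_sign (sd S T) U = blade_sign T U * blade_sign S (sd T U)"
proof -
  note i1 = pinv_left[of S T U] and i2 = pinv_right[of S T U] and c1 = card_sd_int[of S T U]
    and c2 = card_sd_int[of T U S]
  have e: "S \<inter> sd T U = sd T U \<inter> S" "T \<inter> U \<inter> S = S \<inter> T \<inter> U" "T \<inter> S = S \<inter> T" "U \<inter> S = S \<inter> U" by auto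
  show ?thesis unfolding blade_sign_pinv power_add[symmetric]
    apply (rule neg1_pow_eq)
    using i1 i2 c1 c2 unfolding e by presburger
qed

lemma sd_assoc: "sd (sd S T) U = sd S (sd T U)" by blast

lemma bl_assoc: "(bl S \<odot> bl T) \<odot> bl U = bl S \<odot> (bl T \<odot> bl U)"
  by (simp add: bl_clmul_bl clmul_scaleR_left clmul_scaleR_right sd_assoc sign_assoc mult.commute)

lemma clmul_assoc: "(a \<odot> b) \<odot> c = a \<odot> (b \<odot> (c::('k::{finite,linorder}) clif))"
proof -
  have "(a \<odot> b) \<odot> c = (\<Sum>S\<in>UNIV. \<Sum>T\<in>UNIV. (a $ S * b $ T) *\<^sub>R ((bl S \<odot> bl T) \<odot> c))"
    by (subst clmul_bl_expand[of a b]) (simp add: clmul_sum_left clmul_scaleR_left)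
  also have "\<dots> = (\<Sum>S\<in>UNIV. \<Sum>T\<in>UNIV. \<Sum>U\<in>UNIV. (a $ S * b $ T * c $ U) *\<^sub>R ((bl S \<odot> bl T) \<odot> bl U))"
    apply (subst vec_expand[of c])
    by (simp add: clmul_sum_right clmul_scaleR_right scaleR_sum_right)
  also have "\<dots> = (\<Sum>S\<in>UNIV. \<Sum>T\<in>UNIV. \<Sum>U\<in>UNIV. (a $ S * b $ T * c $ U) *\<^sub>R (bl S \<odot> (bl T \<odot> bl U)))"
    by (simp add: bl_assoc)
  also have "\<dots> = (\<Sum>T\<in>UNIV. \<Sum>U\<in>UNIV. \<Sum>S\<in>UNIV. (a $ S * b $ T * c $ U) *\<^sub>R (bl S \<odot> (bl T \<odot> bl U)))"
    apply (rule trans[OF sum.swap]) apply (rule sum.cong[OF refl]) by (rule sum.swap)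
  also have "\<dots> = (\<Sum>T\<in>UNIV. \<Sum>U\<in>UNIV. (b $ T * c $ U) *\<^sub>R (a \<odot> (bl T \<odot> bl U)))"
    apply (subst (2) vec_expand[of a])
    by (simp add: clmul_sum_left clmul_scaleR_left scaleR_sum_right mult.commute mult.left_commute)
  also have "\<dots> = a \<odot> (b \<odot> c)"
    by (subst clmul_bl_expand[of b c]) (simp add: clmul_sum_right clmul_scaleR_right)
  finally show ?thesis .
qed



abbreviation one :: "('k::finite) clif" where "one \<equiv> bl {}"

lemma blade_sign_empty_left: "blade_sign {} T = 1" by (simp add: blade_sign_def)
lemma blade_sign_empty_right: "blade_sign S {} = 1" by (simp add: blade_sign_def)

lemma one_clmul_bl: "one \<odot> bl T = bl T" by (simp add: bl_clmul_bl blade_sign_empty_left)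
lemma bl_clmul_one: "bl T \<odot> one = bl T" by (simp add: bl_clmul_bl blade_sign_empty_right)
lemma clsc_eq: "clsc r = r *\<^sub>R one" by (simp add: clsc_def bl_def vec_eq_iff)
lemma gen_eq: "gen i = bl {i}" by (simp add: gen_def bl_def)
lemma gen_sq: "gen i \<odot> gen i = - (one::('k::{finite,linorder}) clif)"
proof -
  have h: "card {(s, t). s \<in> {i} \<and> t \<in> {i} \<and> t < s} = 0" by (simp add: card_eq_0_iff)
  have "blade_sign {i} {i} = -1" unfolding blade_sign_def h by simp
  then show ?thesis by (simp add: gen_eq bl_clmul_bl)
qed

lemma blade_sign_single: "i \<noteq> j \<Longrightarrow> blade_sign {i} {j} = (if j < i then -1 else (1::real))"
proof -
  assume "i \<noteq> j"
  have h1: "{(s, t). s \<in> {i} \<and> t \<in> {j} \<and> t < s} = (if j < i then {(i,j)} else {})" by auto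
  have h2: "{i} \<inter> {j} = {}" using \<open>i \<noteq> j\<close> by auto
  show ?thesis unfolding blade_sign_def h1 h2 by simp
qed
lemma gen_anti: "i \<noteq> j \<Longrightarrow> gen i \<odot> gen j = - (gen j \<odot> (gen i::('k::{finite,linorder}) clif))"
proof -
  assume ij: "i \<noteq> j"
  have s: "sd {i} {j} = sd {j} {i}" by blast
  have "blade_sign {i} {j} = - blade_sign {j} {i}"
    using ij by (auto simp: blade_sign_single)
  then show ?thesis by (simp add: gen_eq bl_clmul_bl s)
qed

lemma one_clmul [simp]: "one \<odot> a = (a::('k::{finite,linorder}) clif)"
proof -
  have "one \<odot> a = one \<odot> (\<Sum>S\<in>UNIV. (a $ S) *\<^sub>R bl S)" by (subst vec_expand[of a]) (rule refl)
  also have "\<dots> = (\<Sum>S\<in>UNIV. (a $ S) *\<^sub>R bl S)" by (simp add: clmul_sum_right clmul_scaleR_right one_clmul_bl)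
  finally show ?thesis by (simp add: vec_expand[symmetric])
qed
lemma clmul_one [simp]: "a \<odot> one = (a::('k::{finite,linorder}) clif)"
proof -
  have "(\<Sum>S\<in>UNIV. (a $ S) *\<^sub>R bl S) \<odot> one = (\<Sum>S\<in>UNIV. (a $ S) *\<^sub>R bl S)" by (simp add: clmul_sum_left clmul_scaleR_left bl_clmul_one)
  then show ?thesis by (simp add: vec_expand[symmetric])
qed

abbreviation E :: "('k::finite) clif" where "E \<equiv> gen None"

lemma EE [simp]: "E \<odot> (E \<odot> a) = - (a::('k::{finite,linorder}) clif)"
  by (simp only: clmul_assoc[symmetric] gen_sq clmul_minus_left one_clmul)
lemma gg [simp]: "gen i \<odot> (gen i \<odot> a) = - (a::('k::{finite,linorder}) clif)"
  by (simp only: clmul_assoc[symmetric] gen_sq clmul_minus_left one_clmul)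
lemma gE: "gen (Some k) \<odot> E = - (E \<odot> (gen (Some k)::('k::{finite,linorder}) clif))"
  by (rule gen_anti) simp
lemma gEa [simp]: "gen (Some k) \<odot> (E \<odot> a) = - (E \<odot> (gen (Some k) \<odot> (a::('k::{finite,linorder}) clif)))"
  by (simp only: clmul_assoc[symmetric] gE clmul_minus_left)

lemma exp_z_eq: "exp_z x0 x1 = exp x0 *\<^sub>R (cos x1 *\<^sub>R one + sin x1 *\<^sub>R E)"
  by (simp add: exp_z_def clsc_eq)
lemma exp_zbar_eq: "exp_zbar x0 x1 = exp x0 *\<^sub>R (cos x1 *\<^sub>R one - sin x1 *\<^sub>R E)"
  by (simp add: exp_zbar_def clsc_eq)

lemma E_ez [simp]: "E \<odot> (exp_z x0 x1 \<odot> a) = exp_z x0 x1 \<odot> (E \<odot> (a::('k::{finite,linorder}) clif))"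
  by (simp add: exp_z_eq clmul_lin)
lemma E_ezb [simp]: "E \<odot> (exp_zbar x0 x1 \<odot> a) = exp_zbar x0 x1 \<odot> (E \<odot> (a::('k::{finite,linorder}) clif))"
  by (simp add: exp_zbar_eq clmul_lin)
lemma g_ez [simp]: "gen (Some k) \<odot> (exp_z x0 x1 \<odot> a) = exp_zbar x0 x1 \<odot> (gen (Some k) \<odot> (a::('k::{finite,linorder}) clif))"
  by (simp add: exp_z_eq exp_zbar_eq clmul_lin clmul_assoc)
lemma g_ezb [simp]: "gen (Some k) \<odot> (exp_zbar x0 x1 \<odot> a) = exp_z x0 x1 \<odot> (gen (Some k) \<odot> (a::('k::{finite,linorder}) clif))"
  by (simp add: exp_z_eq exp_zbar_eq clmul_lin clmul_assoc)


definition hpd :: "('a::real_normed_vector \<Rightarrow> 'b::real_normed_vector) \<Rightarrow> 'a \<Rightarrow> 'a \<Rightarrow> 'b \<Rightarrow> bool" where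
  "hpd f y d v \<longleftrightarrow> ((\<lambda>t. f (y + t *\<^sub>R d)) has_vector_derivative v) (at 0)"

lemma hpd_pd: "hpd f y d v \<Longrightarrow> pd f y d = v"
  unfolding hpd_def pd_def by (rule vector_derivative_at)

lemma hpd_diffI: "(\<lambda>t. f (y + t *\<^sub>R d)) differentiable (at 0) \<Longrightarrow> hpd f y d (pd f y d)"
  unfolding hpd_def pd_def by (simp add: vector_derivative_works[symmetric])

lemma hpd_add: "hpd f y d v \<Longrightarrow> hpd g y d w \<Longrightarrow> hpd (\<lambda>z. f z + g z) y d (v + w)"
  unfolding hpd_def by (rule has_vector_derivative_add)
lemma hpd_diff: "hpd f y d v \<Longrightarrow> hpd g y d w \<Longrightarrow> hpd (\<lambda>z. f z - g z) y d (v - w)"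
  unfolding hpd_def by (rule has_vector_derivative_diff)
lemma hpd_minus: "hpd f y d v \<Longrightarrow> hpd (\<lambda>z. - f z) y d (- v)"
  unfolding hpd_def by (rule has_vector_derivative_minus)
lemma hpd_const: "hpd (\<lambda>z. c) y d 0"
  unfolding hpd_def by simp
lemma hpd_sum: "(\<And>i. i \<in> I \<Longrightarrow> hpd (f i) y d (v i)) \<Longrightarrow> hpd (\<lambda>z. \<Sum>i\<in>I. f i z) y d (\<Sum>i\<in>I. v i)"
  unfolding hpd_def by (rule has_vector_derivative_sum)
lemma hpd_scaleR: "hpd f y d v \<Longrightarrow> hpd (\<lambda>z. c *\<^sub>R f z) y d (c *\<^sub>R v)"
  unfolding hpd_def by (rule bounded_linear.has_vector_derivative[OF bounded_linear_scaleR_right])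

lemma bl_lmul: "bounded_linear (\<lambda>x. c \<odot> (x::('k::{finite,linorder}) clif))"
  by (simp add: linear_conv_bounded_linear[symmetric] linearI clmul_add_right clmul_scaleR_right)
lemma bl_rmul: "bounded_linear (\<lambda>x. (x::('k::{finite,linorder}) clif) \<odot> c)"
  by (simp add: linear_conv_bounded_linear[symmetric] linearI clmul_add_left clmul_scaleR_left)

lemma hpd_lmul: "hpd f y d v \<Longrightarrow> hpd (\<lambda>z. c \<odot> f z) y d (c \<odot> v)"
  unfolding hpd_def by (rule bounded_linear.has_vector_derivative[OF bl_lmul])
lemma hpd_rmul: "hpd f y d v \<Longrightarrow> hpd (\<lambda>z. f z \<odot> c) y d (v \<odot> c)"
  unfolding hpd_def by (rule bounded_linear.has_vector_derivative[OF bl_rmul])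

lemma d_ez0: "((\<lambda>t. exp_z (x0 + t) x1) has_vector_derivative exp_z x0 x1) (at 0)"
  unfolding exp_z_eq by (auto intro!: derivative_eq_intros)
lemma d_ezb0: "((\<lambda>t. exp_zbar (x0 + t) x1) has_vector_derivative exp_zbar x0 x1) (at 0)"
  unfolding exp_zbar_eq by (auto intro!: derivative_eq_intros)
lemma d_ez1: "((\<lambda>t. exp_z x0 (x1 + t)) has_vector_derivative (exp_z x0 x1 \<odot> (E::('k::{finite,linorder}) clif))) (at 0)"
  unfolding exp_z_eq by (auto intro!: derivative_eq_intros simp: clmul_lin gen_sq algebra_simps)
lemma d_ezb1: "((\<lambda>t. exp_zbar x0 (x1 + t)) has_vector_derivative - (exp_zbar x0 x1 \<odot> (E::('k::{finite,linorder}) clif))) (at 0)"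
  unfolding exp_zbar_eq by (auto intro!: derivative_eq_intros simp: clmul_lin gen_sq algebra_simps)

lemma pdF0: "pd (\<lambda>(x0, x1, y). exp_z x0 x1 \<odot> A y + exp_zbar x0 x1 \<odot> B y) (x0, x1, y) (1, 0, 0)
   = exp_z x0 x1 \<odot> A y + exp_zbar x0 x1 \<odot> (B y :: ('k::{finite,linorder}) clif)"
  unfolding pd_def
  apply (rule vector_derivative_at)
  apply (simp add: add.commute)
  apply (intro has_vector_derivative_add bounded_linear.has_vector_derivative[OF bl_rmul])
  using d_ez0[of x0 x1] d_ezb0[of x0 x1] by (simp_all add: add.commute)

lemma pdF1: "pd (\<lambda>(x0, x1, y). exp_z x0 x1 \<odot> A y + exp_zbar x0 x1 \<odot> B y) (x0, x1, y) (0, 1, 0)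
   = (exp_z x0 x1 \<odot> E) \<odot> A y - (exp_zbar x0 x1 \<odot> E) \<odot> (B y :: ('k::{finite,linorder}) clif)"
  unfolding pd_def
  apply (rule vector_derivative_at)
  apply (simp add: add.commute)
  apply (subst diff_conv_add_uminus)
  apply (subst clmul_minus_left[symmetric])
  apply (intro has_vector_derivative_add bounded_linear.has_vector_derivative[OF bl_rmul])
  using d_ez1[of x0 x1] d_ezb1[of x0 x1] by (simp_all add: add.commute)

lemma pdFk: "hpd A y d a \<Longrightarrow> hpd B y d b \<Longrightarrow>
   pd (\<lambda>(x0, x1, y). exp_z x0 x1 \<odot> A y + exp_zbar x0 x1 \<odot> B y) (x0, x1, y) (0, 0, d)
   = exp_z x0 x1 \<odot> a + exp_zbar x0 x1 \<odot> (b :: ('k::{finite,linorder}) clif)"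
  unfolding pd_def hpd_def
  apply (rule vector_derivative_at)
  apply simp
  by (intro has_vector_derivative_add bounded_linear.has_vector_derivative[OF bl_lmul])
lemma clmul_two_right: "c \<odot> (2 * b) = 2 * (c \<odot> (b::('k::{finite,linorder}) clif))"
  unfolding mult_2 by (rule clmul_add_right)

lemma core_left:
  fixes A B :: "(real, 'k::{finite,linorder}) vec \<Rightarrow> 'k clif"
  assumes hA: "\<And>k. hpd A y (axis k 1) (dy k A y)" and hB: "\<And>k. hpd B y (axis k 1) (dy k B y)"
  shows "left_dirac (\<lambda>(x0, x1, y). exp_z x0 x1 \<odot> A y + exp_zbar x0 x1 \<odot> B y) (x0, x1, y)
    = exp_zbar x0 x1 \<odot> (B y + B y + left_dirac_y A y) + exp_z x0 x1 \<odot> left_dirac_y B y"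
  unfolding left_dirac_def pdF0 pdF1 pdFk[OF hA hB] left_dirac_y_def
  by (simp add: clmul_lin clmul_assoc sum.distrib clmul_two_right)

lemma core_right:
  fixes A B :: "(real, 'k::{finite,linorder}) vec \<Rightarrow> 'k clif"
  assumes hA: "\<And>k. hpd A y (axis k 1) (dy k A y)" and hB: "\<And>k. hpd B y (axis k 1) (dy k B y)"
  shows "right_dirac (\<lambda>(x0, x1, y). exp_z x0 x1 \<odot> A y + exp_zbar x0 x1 \<odot> B y) (x0, x1, y)
    = exp_z x0 x1 \<odot> (A y + E \<odot> A y \<odot> E + right_dirac_y A y)
      + exp_zbar x0 x1 \<odot> (B y - E \<odot> B y \<odot> E + right_dirac_y B y)"
  unfolding right_dirac_def pdF0 pdF1 pdFk[OF hA hB] right_dirac_y_def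
  by (simp add: clmul_lin clmul_assoc sum.distrib)


lemma shiftD:
  fixes u w :: "'a::real_normed_vector" and g :: "'a \<Rightarrow> real"
  assumes "\<And>z. DERIV (\<lambda>t. g (z + t *\<^sub>R u)) 0 :> gu z"
  shows "DERIV (\<lambda>s. g (w + s *\<^sub>R u)) s0 :> gu (w + s0 *\<^sub>R u)"
proof -
  have "DERIV (\<lambda>t. g ((w + s0 *\<^sub>R u) + t *\<^sub>R u)) 0 :> gu (w + s0 *\<^sub>R u)" by (rule assms)
  moreover have "(\<lambda>t. g ((w + s0 *\<^sub>R u) + t *\<^sub>R u)) = (\<lambda>t. (\<lambda>s. g (w + s *\<^sub>R u)) (t + s0))"
    by (rule ext) (simp add: scaleR_add_left add_ac)
  ultimately have "((\<lambda>t. (\<lambda>s. g (w + s *\<^sub>R u)) (t + s0)) has_field_derivative gu (w + s0 *\<^sub>R u)) (at 0)" by simp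
  then show ?thesis using DERIV_shift[of "\<lambda>s. g (w + s *\<^sub>R u)" _ 0 s0] by simp
qed

lemma clairaut_step:
  fixes g :: "'a::real_normed_vector \<Rightarrow> real"
  assumes D1: "\<And>z. DERIV (\<lambda>t. g (z + t *\<^sub>R u)) 0 :> gu z"
    and D2: "\<And>z. DERIV (\<lambda>t. g (z + t *\<^sub>R v)) 0 :> gv z"
    and D12: "\<And>z. DERIV (\<lambda>t. gu (z + t *\<^sub>R v)) 0 :> guv z"
    and D21: "\<And>z. DERIV (\<lambda>t. gv (z + t *\<^sub>R u)) 0 :> gvu z"
    and h: "0 < h"
  shows "\<exists>s t s' t'. 0 < s \<and> s < h \<and> 0 < t \<and> t < h \<and> 0 < s' \<and> s' < h \<and> 0 < t' \<and> t' < h \<and>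
     guv (x + s *\<^sub>R u + t *\<^sub>R v) = gvu (x + s' *\<^sub>R u + t' *\<^sub>R v)"
proof -
  define \<Delta> where "\<Delta> = g (x + h *\<^sub>R u + h *\<^sub>R v) - g (x + h *\<^sub>R u) - g (x + h *\<^sub>R v) + g x"
  have "\<exists>s. 0 < s \<and> s < h \<and> (g ((x + h *\<^sub>R v) + h *\<^sub>R u) - g (x + h *\<^sub>R u)) - (g ((x + h *\<^sub>R v) + 0 *\<^sub>R u) - g (x + 0 *\<^sub>R u))
      = (h - 0) * (gu ((x + h *\<^sub>R v) + s *\<^sub>R u) - gu (x + s *\<^sub>R u))"
    apply (rule MVT2[OF h])
    by (intro DERIV_diff shiftD[OF D1])
  then obtain s where s: "0 < s" "s < h" "\<Delta> = h * (gu ((x + s *\<^sub>R u) + h *\<^sub>R v) - gu ((x + s *\<^sub>R u) + 0 *\<^sub>R v))"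
    by (auto simp: \<Delta>_def algebra_simps)
  have "\<exists>t. 0 < t \<and> t < h \<and> gu ((x + s *\<^sub>R u) + h *\<^sub>R v) - gu ((x + s *\<^sub>R u) + 0 *\<^sub>R v) = (h - 0) * guv ((x + s *\<^sub>R u) + t *\<^sub>R v)"
    apply (rule MVT2[OF h])
    by (rule shiftD[OF D12])
  then obtain t where t: "0 < t" "t < h" "\<Delta> = h * (h * guv (x + s *\<^sub>R u + t *\<^sub>R v))"
    using s by auto
  have "\<exists>t'. 0 < t' \<and> t' < h \<and> (g ((x + h *\<^sub>R u) + h *\<^sub>R v) - g (x + h *\<^sub>R v)) - (g ((x + h *\<^sub>R u) + 0 *\<^sub>R v) - g (x + 0 *\<^sub>R v))
      = (h - 0) * (gv ((x + h *\<^sub>R u) + t' *\<^sub>R v) - gv (x + t' *\<^sub>R v))"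
    apply (rule MVT2[OF h])
    by (intro DERIV_diff shiftD[OF D2])
  then obtain t' where t': "0 < t'" "t' < h" "\<Delta> = h * (gv ((x + t' *\<^sub>R v) + h *\<^sub>R u) - gv ((x + t' *\<^sub>R v) + 0 *\<^sub>R u))"
    by (auto simp: \<Delta>_def algebra_simps)
  have "\<exists>s'. 0 < s' \<and> s' < h \<and> gv ((x + t' *\<^sub>R v) + h *\<^sub>R u) - gv ((x + t' *\<^sub>R v) + 0 *\<^sub>R u) = (h - 0) * gvu ((x + t' *\<^sub>R v) + s' *\<^sub>R u)"
    apply (rule MVT2[OF h])
    by (rule shiftD[OF D21])
  then obtain s' where s': "0 < s'" "s' < h" "\<Delta> = h * (h * gvu (x + s' *\<^sub>R u + t' *\<^sub>R v))"
    using t' by (auto simp: algebra_simps)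
  have "guv (x + s *\<^sub>R u + t *\<^sub>R v) = gvu (x + s' *\<^sub>R u + t' *\<^sub>R v)"
    using t(3) s'(3) h by simp
  then show ?thesis using s t s' t' by blast
qed

lemma clairaut_real:
  fixes g :: "'a::real_normed_vector \<Rightarrow> real"
  assumes D1: "\<And>z. DERIV (\<lambda>t. g (z + t *\<^sub>R u)) 0 :> gu z"
    and D2: "\<And>z. DERIV (\<lambda>t. g (z + t *\<^sub>R v)) 0 :> gv z"
    and D12: "\<And>z. DERIV (\<lambda>t. gu (z + t *\<^sub>R v)) 0 :> guv z"
    and D21: "\<And>z. DERIV (\<lambda>t. gv (z + t *\<^sub>R u)) 0 :> gvu z"
    and C1: "continuous (at x) guv" and C2: "continuous (at x) gvu"
  shows "guv x = gvu x"
proof (rule ccontr)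
  assume ne: "guv x \<noteq> gvu x"
  define e where "e = \<bar>guv x - gvu x\<bar> / 2"
  have e: "e > 0" using ne by (simp add: e_def)
  obtain d1 where d1: "d1 > 0" "\<And>y. dist y x < d1 \<Longrightarrow> dist (guv y) (guv x) < e"
    using C1 e unfolding continuous_at_eps_delta by blast
  obtain d2 where d2: "d2 > 0" "\<And>y. dist y x < d2 \<Longrightarrow> dist (gvu y) (gvu x) < e"
    using C2 e unfolding continuous_at_eps_delta by blast
  define h where "h = min d1 d2 / (norm u + norm v + 1)"
  have pos: "norm u + norm v + 1 > 0" using norm_ge_zero[of u] norm_ge_zero[of v] by linarith
  have h: "h > 0" unfolding h_def using d1(1) d2(1) pos by (intro divide_pos_pos) auto
  have hb: "h * (norm u + norm v) < min d1 d2"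
  proof -
    have "h * (norm u + norm v) < h * (norm u + norm v + 1)" using h by simp
    also have "\<dots> = min d1 d2" unfolding h_def using pos by simp
    finally show ?thesis .
  qed
  have close: "dist (x + s *\<^sub>R u + t *\<^sub>R v) x < min d1 d2" if "0 < s" "s < h" "0 < t" "t < h" for s t
  proof -
    have "dist (x + s *\<^sub>R u + t *\<^sub>R v) x = norm (s *\<^sub>R u + t *\<^sub>R v)" by (simp add: dist_norm)
    also have "\<dots> \<le> norm (s *\<^sub>R u) + norm (t *\<^sub>R v)" by (rule norm_triangle_ineq)
    also have "\<dots> = s * norm u + t * norm v" using that by simp
    also have "\<dots> \<le> h * norm u + h * norm v"
      using that by (intro add_mono mult_right_mono) auto
    also have "\<dots> < min d1 d2" using hb by (simp add: algebra_simps)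
    finally show ?thesis .
  qed
  obtain s t s' t' where st: "0 < s" "s < h" "0 < t" "t < h" "0 < s'" "s' < h" "0 < t'" "t' < h"
     and eq: "guv (x + s *\<^sub>R u + t *\<^sub>R v) = gvu (x + s' *\<^sub>R u + t' *\<^sub>R v)"
    using clairaut_step[OF D1 D2 D12 D21 h, of x] by blast
  have a: "dist (guv (x + s *\<^sub>R u + t *\<^sub>R v)) (guv x) < e"
    using d1(2) close[of s t] st by auto
  have b: "dist (gvu (x + s' *\<^sub>R u + t' *\<^sub>R v)) (gvu x) < e"
    using d2(2) close[of s' t'] st by auto
  have "\<bar>guv x - gvu x\<bar> < e + e" using a b eq by (simp add: dist_real_def)
  then show False by (simp add: e_def)
qed
lemma smooth_hpd0: "smooth f \<Longrightarrow> hpd f y d (pd f y d)"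
  unfolding smooth_def by (rule hpd_diffI) (metis iter_pd.simps(1))

lemma smooth_hpd1: "smooth f \<Longrightarrow> hpd (\<lambda>z. pd f z e) y d (pd (\<lambda>z. pd f z e) y d)"
proof -
  assume "smooth f"
  then have "(\<lambda>t. iter_pd f [e] (y + t *\<^sub>R d)) differentiable (at 0)" unfolding smooth_def by blast
  then show ?thesis by (intro hpd_diffI) simp
qed

lemma smooth_cont2: "smooth f \<Longrightarrow> continuous (at x) (\<lambda>z. pd (\<lambda>z. pd f z e) z d)"
proof -
  assume "smooth f"
  then have "continuous (at x) (iter_pd f [d, e])" unfolding smooth_def by blast
  then show ?thesis by simp
qed

lemma hpd_comp: "hpd f y d v \<Longrightarrow> DERIV (\<lambda>t. f (y + t *\<^sub>R d) $ C) 0 :> v $ C"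
  unfolding hpd_def has_real_derivative_iff_has_vector_derivative
  by (rule bounded_linear.has_vector_derivative[OF bounded_linear_vec_nth])

lemma clairaut:
  fixes f :: "'a::real_normed_vector \<Rightarrow> real ^ 'n"
  assumes "smooth f"
  shows "pd (\<lambda>z. pd f z u) x v = pd (\<lambda>z. pd f z v) x u"
proof (subst vec_eq_iff, rule allI)
  fix C
  show "pd (\<lambda>z. pd f z u) x v $ C = pd (\<lambda>z. pd f z v) x u $ C"
  proof (rule clairaut_real[where g = "\<lambda>z. f z $ C" and u = u and v = v
        and gu = "\<lambda>z. pd f z u $ C" and gv = "\<lambda>z. pd f z v $ C"
        and guv = "\<lambda>z. pd (\<lambda>z. pd f z u) z v $ C" and gvu = "\<lambda>z. pd (\<lambda>z. pd f z v) z u $ C"])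
    show "\<And>z. DERIV (\<lambda>t. f (z + t *\<^sub>R u) $ C) 0 :> pd f z u $ C"
      by (rule hpd_comp[OF smooth_hpd0[OF assms]])
    show "\<And>z. DERIV (\<lambda>t. f (z + t *\<^sub>R v) $ C) 0 :> pd f z v $ C"
      by (rule hpd_comp[OF smooth_hpd0[OF assms]])
    show "\<And>z. DERIV (\<lambda>t. pd f (z + t *\<^sub>R v) u $ C) 0 :> pd (\<lambda>z. pd f z u) z v $ C"
      by (rule hpd_comp[OF smooth_hpd1[OF assms]])
    show "\<And>z. DERIV (\<lambda>t. pd f (z + t *\<^sub>R u) v $ C) 0 :> pd (\<lambda>z. pd f z v) z u $ C"
      by (rule hpd_comp[OF smooth_hpd1[OF assms]])
    show "continuous (at x) (\<lambda>z. pd (\<lambda>z. pd f z u) z v $ C)"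
      using smooth_cont2[OF assms, of x u v] by (simp add: isCont_vec_nth)
    show "continuous (at x) (\<lambda>z. pd (\<lambda>z. pd f z v) z u $ C)"
      using smooth_cont2[OF assms, of x v u] by (simp add: isCont_vec_nth)
  qed
qed


lemma double_cancel: "x + x = y + (y::'a::real_vector) \<Longrightarrow> x = y"
proof -
  assume "x + x = y + y"
  then have "2 *\<^sub>R x = 2 *\<^sub>R y" by (simp add: scaleR_2)
  then show "x = y" by simp
qed

lemma gg_anti: "k \<noteq> l \<Longrightarrow> gen (Some l) \<odot> (gen (Some k) \<odot> a) = - (gen (Some k) \<odot> (gen (Some l) \<odot> (a::('k::{finite,linorder}) clif)))"
proof -
  assume "k \<noteq> l"
  then have "gen (Some l) \<odot> gen (Some k) = - (gen (Some k) \<odot> (gen (Some l)::('k::{finite,linorder}) clif))" by (intro gen_anti) simp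
  then show ?thesis by (simp only: clmul_assoc[symmetric] clmul_minus_left)
qed

lemma symsum_left:
  fixes D :: "'k::{finite,linorder} \<Rightarrow> 'k \<Rightarrow> 'k clif"
  assumes sym: "\<And>k l. D k l = D l k"
  shows "(\<Sum>k\<in>UNIV. \<Sum>l\<in>UNIV. gen (Some k) \<odot> (gen (Some l) \<odot> D k l)) = - (\<Sum>k\<in>UNIV. D k k)"
proof (rule double_cancel)
  define f where "f k l = gen (Some k) \<odot> (gen (Some l) \<odot> D k l)" for k l
  have fs: "f k l + f l k = (if l = k then - (D k k + D k k) else 0)" for k l
  proof (cases "k = l")
    case True then show ?thesis by (simp add: f_def)
  next
    case False then show ?thesis by (simp add: f_def gg_anti[OF False] sym[of l k])
  qed
  have "(\<Sum>k\<in>UNIV. \<Sum>l\<in>UNIV. f k l) + (\<Sum>k\<in>UNIV. \<Sum>l\<in>UNIV. f k l)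
      = (\<Sum>k\<in>UNIV. \<Sum>l\<in>UNIV. f k l) + (\<Sum>k\<in>UNIV. \<Sum>l\<in>UNIV. f l k)"
    by (subst (3) sum.swap) (rule refl)
  also have "\<dots> = (\<Sum>k\<in>UNIV. \<Sum>l\<in>UNIV. f k l + f l k)" by (simp add: sum.distrib)
  also have "\<dots> = (\<Sum>k\<in>UNIV. - (D k k + D k k))" by (simp add: fs)
  also have "\<dots> = - (\<Sum>k\<in>UNIV. D k k) + - (\<Sum>k\<in>UNIV. D k k)" by (simp add: sum.distrib sum_negf sum_distrib_left)
  finally show "(\<Sum>k\<in>UNIV. \<Sum>l\<in>UNIV. gen (Some k) \<odot> (gen (Some l) \<odot> D k l)) + (\<Sum>k\<in>UNIV. \<Sum>l\<in>UNIV. gen (Some k) \<odot> (gen (Some l) \<odot> D k l)) = - (\<Sum>k\<in>UNIV. D k k) + - (\<Sum>k\<in>UNIV. D k k)"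
    by (simp add: f_def)
qed

lemma gg_anti_r: "k \<noteq> l \<Longrightarrow> a \<odot> (gen (Some k) \<odot> gen (Some l)) = - (a \<odot> (gen (Some l) \<odot> (gen (Some k)::('k::{finite,linorder}) clif)))"
proof -
  assume "k \<noteq> l"
  then have "gen (Some k) \<odot> gen (Some l) = - (gen (Some l) \<odot> (gen (Some k)::('k::{finite,linorder}) clif))" by (intro gen_anti) simp
  then show ?thesis by (simp only: clmul_minus_right)
qed

lemma symsum_right:
  fixes D :: "'k::{finite,linorder} \<Rightarrow> 'k \<Rightarrow> 'k clif"
  assumes sym: "\<And>k l. D k l = D l k"
  shows "(\<Sum>k\<in>UNIV. \<Sum>l\<in>UNIV. D k l \<odot> (gen (Some l) \<odot> gen (Some k))) = - (\<Sum>k\<in>UNIV. D k k)"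
proof (rule double_cancel)
  define f where "f k l = D k l \<odot> (gen (Some l) \<odot> gen (Some k))" for k l
  have fs: "f k l + f l k = (if l = k then - (D k k + D k k) else 0)" for k l
  proof (cases "k = l")
    case True then show ?thesis by (simp add: f_def gen_sq clmul_minus_right)
  next
    case False then show ?thesis by (simp add: f_def gg_anti_r[OF False] sym[of l k])
  qed
  have "(\<Sum>k\<in>UNIV. \<Sum>l\<in>UNIV. f k l) + (\<Sum>k\<in>UNIV. \<Sum>l\<in>UNIV. f k l)
      = (\<Sum>k\<in>UNIV. \<Sum>l\<in>UNIV. f k l) + (\<Sum>k\<in>UNIV. \<Sum>l\<in>UNIV. f l k)"
    by (subst (3) sum.swap) (rule refl)
  also have "\<dots> = (\<Sum>k\<in>UNIV. \<Sum>l\<in>UNIV. f k l + f l k)" by (simp add: sum.distrib)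
  also have "\<dots> = (\<Sum>k\<in>UNIV. - (D k k + D k k))" by (simp add: fs)
  also have "\<dots> = - (\<Sum>k\<in>UNIV. D k k) + - (\<Sum>k\<in>UNIV. D k k)" by (simp add: sum.distrib sum_negf sum_distrib_left)
  finally show "(\<Sum>k\<in>UNIV. \<Sum>l\<in>UNIV. D k l \<odot> (gen (Some l) \<odot> gen (Some k))) + (\<Sum>k\<in>UNIV. \<Sum>l\<in>UNIV. D k l \<odot> (gen (Some l) \<odot> gen (Some k))) = - (\<Sum>k\<in>UNIV. D k k) + - (\<Sum>k\<in>UNIV. D k k)"
    by (simp add: f_def)
qed

lemma separate:
  assumes "\<And>x0 x1. exp_z x0 x1 \<odot> P + exp_zbar x0 x1 \<odot> Q = (0::('k::{finite,linorder}) clif)"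
  shows "P = 0 \<and> Q = 0"
proof -
  have 1: "P + Q = 0" using assms[of 0 0] by (simp add: exp_z_eq exp_zbar_eq)
  have "E \<odot> P - E \<odot> Q = 0" using assms[of 0 "pi/2"] by (simp add: exp_z_eq exp_zbar_eq clmul_lin)
  then have "E \<odot> (E \<odot> P) = E \<odot> (E \<odot> Q)" by simp
  then have "P = Q" by simp
  with 1 show ?thesis by (metis add_cancel_right_right double_cancel)
qed



type_synonym 'k fn = "(real, 'k) vec \<Rightarrow> 'k clif"

lemma dy_fun: "dy l A = (\<lambda>z. pd A z (axis l 1))" by (rule ext) (simp add: dy_def)

lemma sm_h0: "smooth A \<Longrightarrow> hpd A y (axis k 1) (dy k A y)"
  unfolding dy_def by (rule smooth_hpd0)

lemma sm_h1: "smooth (A::('k::{finite,linorder}) fn) \<Longrightarrow> hpd (dy l A) y (axis k 1) (dy k (dy l A) y)"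
  unfolding dy_fun by (rule smooth_hpd1)

lemma sm_sym: "smooth (A::('k::{finite,linorder}) fn) \<Longrightarrow> dy k (dy l A) y = dy l (dy k A) y"
  unfolding dy_fun by (rule clairaut)

lemma ldy_fun: "left_dirac_y A = (\<lambda>y. \<Sum>l\<in>UNIV. gen (Some l) \<odot> dy l A y)"
  by (rule ext) (simp add: left_dirac_y_def)
lemma rdy_fun: "right_dirac_y A = (\<lambda>y. \<Sum>l\<in>UNIV. dy l A y \<odot> gen (Some l))"
  by (rule ext) (simp add: right_dirac_y_def)

lemma hpd_LA: "smooth (A::('k::{finite,linorder}) fn) \<Longrightarrow>
   hpd (left_dirac_y A) y (axis k 1) (\<Sum>l\<in>UNIV. gen (Some l) \<odot> dy k (dy l A) y)"
  unfolding ldy_fun by (intro hpd_sum hpd_lmul sm_h1)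
lemma hpd_RA: "smooth (A::('k::{finite,linorder}) fn) \<Longrightarrow>
   hpd (right_dirac_y A) y (axis k 1) (\<Sum>l\<in>UNIV. dy k (dy l A) y \<odot> gen (Some l))"
  unfolding rdy_fun by (intro hpd_sum hpd_rmul sm_h1)

lemma hpd_zero: "hpd f y d v \<Longrightarrow> (\<And>z. f z = 0) \<Longrightarrow> v = 0"
proof -
  assume h: "hpd f y d v" and z: "\<And>z. f z = 0"
  have "f = (\<lambda>_. 0)" using z by auto
  with h have "hpd (\<lambda>_. 0) y d v" by simp
  then have "pd (\<lambda>_. 0) y d = v" by (rule hpd_pd)
  moreover have "pd (\<lambda>_. 0) y d = (0::'b)" by (rule hpd_pd[OF hpd_const])
  ultimately show ?thesis by simp
qed

lemma half_half: "- ((1/2) *\<^sub>R x) + - ((1/2) *\<^sub>R x) = - (x::'a::real_vector)"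
proof -
  have "(1/2) *\<^sub>R x + (1/2) *\<^sub>R x = x" by (simp add: scaleR_add_left[symmetric])
  then show ?thesis by (metis minus_add_distrib)
qed

lemma left_sep:
  fixes A B :: "('k::{finite,linorder}) fn"
  assumes "smooth A" "smooth B"
    and L: "\<forall>p. left_dirac (\<lambda>(x0, x1, y). exp_z x0 x1 \<odot> A y + exp_zbar x0 x1 \<odot> B y) p = 0"
  shows "B y + B y + left_dirac_y A y = 0 \<and> left_dirac_y B y = 0"
proof -
  have "exp_z x0 x1 \<odot> left_dirac_y B y + exp_zbar x0 x1 \<odot> (B y + B y + left_dirac_y A y) = 0" for x0 x1
    using L[rule_format, of "(x0, x1, y)"] core_left[OF sm_h0[OF assms(1)] sm_h0[OF assms(2)], of x0 x1 y]
    by (simp add: add.commute)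
  from separate[OF this] show ?thesis by simp
qed

lemma right_sep:
  fixes A B :: "('k::{finite,linorder}) fn"
  assumes "smooth A" "smooth B"
    and R: "\<forall>p. right_dirac (\<lambda>(x0, x1, y). exp_z x0 x1 \<odot> A y + exp_zbar x0 x1 \<odot> B y) p = 0"
  shows "A y + E \<odot> A y \<odot> E + right_dirac_y A y = 0"
proof -
  have "exp_z x0 x1 \<odot> (A y + E \<odot> A y \<odot> E + right_dirac_y A y) + exp_zbar x0 x1 \<odot> (B y - E \<odot> B y \<odot> E + right_dirac_y B y) = 0" for x0 x1
    using R[rule_format, of "(x0, x1, y)"] core_right[OF sm_h0[OF assms(1)] sm_h0[OF assms(2)], of x0 x1 y]
    by simp
  from separate[OF this] show ?thesis by simp
qed

lemma part1_fwd:
  fixes A B :: "('k::{finite,linorder}) fn"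
  assumes sA: "smooth A" and sB: "smooth B"
    and T: "two_sided_monogenic (\<lambda>(x0, x1, y). exp_z x0 x1 \<odot> A y + exp_zbar x0 x1 \<odot> B y)"
  shows "harmonic A
                  \<and> (\<forall>y. A y + gen None \<odot> A y \<odot> gen None + right_dirac_y A y = 0)
                  \<and> (\<forall>y. left_dirac_y B y = 0)
                  \<and> (\<forall>y. B y = - ((1/2) *\<^sub>R left_dirac_y A y))"
proof -
  note L = left_sep[OF sA sB T[unfolded two_sided_monogenic_def, THEN conjunct1]]
  note R = right_sep[OF sA sB T[unfolded two_sided_monogenic_def, THEN conjunct2]]
  have Bd: "B y = - ((1/2) *\<^sub>R left_dirac_y A y)" for y
  proof (rule double_cancel)
    show "B y + B y = - ((1/2) *\<^sub>R left_dirac_y A y) + - ((1/2) *\<^sub>R left_dirac_y A y)"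
      using L[of y] unfolding half_half by (simp add: eq_neg_iff_add_eq_0)
  qed
  have Bf: "B = (\<lambda>y. - ((1/2) *\<^sub>R left_dirac_y A y))" using Bd by auto
  have H: "(\<Sum>k\<in>UNIV. dy k (dy k A) y) = 0" for y
  proof -
    have hB: "hpd B y (axis k 1) (- ((1/2) *\<^sub>R (\<Sum>l\<in>UNIV. gen (Some l) \<odot> dy k (dy l A) y)))" for k
      unfolding Bf by (intro hpd_minus hpd_scaleR hpd_LA sA)
    have "left_dirac_y B y = (\<Sum>k\<in>UNIV. gen (Some k) \<odot> (- ((1/2) *\<^sub>R (\<Sum>l\<in>UNIV. gen (Some l) \<odot> dy k (dy l A) y))))"
      unfolding left_dirac_y_def dy_def[of _ B] hpd_pd[OF hB] ..
    also have "\<dots> = - ((1/2) *\<^sub>R (\<Sum>k\<in>UNIV. \<Sum>l\<in>UNIV. gen (Some k) \<odot> (gen (Some l) \<odot> dy k (dy l A) y)))"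
      by (simp add: clmul_lin scaleR_sum_right sum_negf)
    also have "\<dots> = (1/2) *\<^sub>R (\<Sum>k\<in>UNIV. dy k (dy k A) y)"
      by (subst symsum_left[where D = "\<lambda>k l. dy k (dy l A) y"]) (auto intro: sm_sym[OF sA])
    finally show ?thesis using L[of y] by simp
  qed
  show ?thesis using H Bd R L unfolding harmonic_def by blast
qed

lemma part1_bwd:
  fixes A B :: "('k::{finite,linorder}) fn"
  assumes sA: "smooth A" and sB: "smooth B"
    and I: "\<forall>y. A y + gen None \<odot> A y \<odot> gen None + right_dirac_y A y = 0"
    and LB: "\<forall>y. left_dirac_y B y = 0"
    and Bd: "\<forall>y. B y = - ((1/2) *\<^sub>R left_dirac_y A y)"
  shows "two_sided_monogenic (\<lambda>(x0, x1, y). exp_z x0 x1 \<odot> A y + exp_zbar x0 x1 \<odot> B y)"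
proof -
  have Bf: "B = (\<lambda>y. - ((1/2) *\<^sub>R left_dirac_y A y))" using Bd by auto
  have BB: "B y + B y + left_dirac_y A y = 0" for y
    using Bd half_half[of "left_dirac_y A y"] by simp
  have Key: "B y - E \<odot> B y \<odot> E + right_dirac_y B y = 0" for y
  proof -
    define D where "D k l = dy k (dy l A) y" for k l
    have Ds: "D k l = D l k" for k l unfolding D_def by (rule sm_sym[OF sA])
    have J: "dy k A y + E \<odot> dy k A y \<odot> E + (\<Sum>l\<in>UNIV. D k l \<odot> gen (Some l)) = 0" for k
    proof (rule hpd_zero)
      show "hpd (\<lambda>y. A y + E \<odot> A y \<odot> E + right_dirac_y A y) y (axis k 1)
          (dy k A y + E \<odot> dy k A y \<odot> E + (\<Sum>l\<in>UNIV. D k l \<odot> gen (Some l)))"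
        unfolding D_def by (intro hpd_add hpd_rmul hpd_lmul hpd_RA sm_h0 sA)
      show "\<And>z. A z + E \<odot> A z \<odot> E + right_dirac_y A z = 0" using I by simp
    qed
    define X where "X = (\<Sum>k\<in>UNIV. \<Sum>l\<in>UNIV. gen (Some k) \<odot> (D k l \<odot> gen (Some l)))"
    have "(\<Sum>k\<in>UNIV. gen (Some k) \<odot> (dy k A y + E \<odot> dy k A y \<odot> E + (\<Sum>l\<in>UNIV. D k l \<odot> gen (Some l)))) = 0"
      using J by (simp add: clmul_zero_right)
    then have J2: "left_dirac_y A y - E \<odot> (left_dirac_y A y \<odot> E) + X = 0"
      unfolding X_def left_dirac_y_def
      by (simp add: clmul_lin clmul_assoc sum.distrib sum_negf sum_subtractf)
    have hB: "hpd B y (axis k 1) (- ((1/2) *\<^sub>R (\<Sum>l\<in>UNIV. gen (Some l) \<odot> D k l)))" for k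
      unfolding Bf D_def by (intro hpd_minus hpd_scaleR hpd_LA sA)
    have "right_dirac_y B y = (\<Sum>k\<in>UNIV. (- ((1/2) *\<^sub>R (\<Sum>l\<in>UNIV. gen (Some l) \<odot> D k l))) \<odot> gen (Some k))"
      unfolding right_dirac_y_def dy_def[of _ B] hpd_pd[OF hB] ..
    also have "\<dots> = - ((1/2) *\<^sub>R (\<Sum>k\<in>UNIV. \<Sum>l\<in>UNIV. gen (Some l) \<odot> (D l k \<odot> gen (Some k))))"
      by (simp add: clmul_lin clmul_assoc scaleR_sum_right sum_negf Ds)
    also have "\<dots> = - ((1/2) *\<^sub>R X)"
      unfolding X_def by (subst sum.swap) (rule refl)
    finally have RB: "right_dirac_y B y = - ((1/2) *\<^sub>R X)" .
    have "B y - E \<odot> B y \<odot> E + right_dirac_y B y = - ((1/2) *\<^sub>R (left_dirac_y A y - E \<odot> (left_dirac_y A y \<odot> E) + X))"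
      unfolding RB Bd[rule_format] by (simp add: clmul_lin clmul_assoc algebra_simps)
    then show ?thesis using J2 by simp
  qed
  show ?thesis unfolding two_sided_monogenic_def
  proof (intro conjI allI)
    fix p :: "real \<times> real \<times> (real, 'k) vec"
    obtain x0 x1 y where p: "p = (x0, x1, y)" by (cases p) auto
    show "left_dirac (\<lambda>(x0, x1, y). exp_z x0 x1 \<odot> A y + exp_zbar x0 x1 \<odot> B y) p = 0"
      unfolding p core_left[OF sm_h0[OF sA] sm_h0[OF sB]] BB LB[rule_format] by (simp add: clmul_lin)
    show "right_dirac (\<lambda>(x0, x1, y). exp_z x0 x1 \<odot> A y + exp_zbar x0 x1 \<odot> B y) p = 0"
      unfolding p core_right[OF sm_h0[OF sA] sm_h0[OF sB]] Key I[rule_format] by (simp add: clmul_lin)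
  qed
qed

lemma hpd_self: "hpd f y d v \<Longrightarrow> hpd f y d (pd f y d)"
  by (simp add: hpd_pd)

lemma Eg: "E \<odot> gen (Some k) = - (gen (Some k) \<odot> (E::('k::{finite,linorder}) clif))"
  by (simp add: gE)

lemma part2:
  fixes M :: "('k::{finite,linorder}) fn"
  assumes sM: "smooth M" and RM: "\<forall>y. right_dirac_y M y = 0"
  shows "two_sided_monogenic (\<lambda>(x0, x1, y).
               exp_z x0 x1 \<odot> (M y - gen None \<odot> M y \<odot> gen None)
               - (1/2) *\<^sub>R (exp_zbar x0 x1 \<odot>
                   (left_dirac_y M y + gen None \<odot> left_dirac_y M y \<odot> gen None)))"
proof -
  define A where "A y = M y - E \<odot> M y \<odot> E" for y
  define B where "B y = - ((1/2) *\<^sub>R (left_dirac_y M y + E \<odot> left_dirac_y M y \<odot> E))" for y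
  have Feq: "(\<lambda>(x0, x1, y).
               exp_z x0 x1 \<odot> (M y - gen None \<odot> M y \<odot> gen None)
               - (1/2) *\<^sub>R (exp_zbar x0 x1 \<odot>
                   (left_dirac_y M y + gen None \<odot> left_dirac_y M y \<odot> gen None)))
        = (\<lambda>(x0, x1, y). exp_z x0 x1 \<odot> A y + exp_zbar x0 x1 \<odot> B y)"
    by (rule ext) (auto simp: A_def B_def clmul_scaleR_right clmul_minus_right)
  define LMk where "LMk k y = (\<Sum>l\<in>UNIV. gen (Some l) \<odot> dy k (dy l M) y)" for k y
  have hA1: "hpd A y (axis k 1) (dy k M y - E \<odot> dy k M y \<odot> E)" for y k
    unfolding A_def[abs_def] by (intro hpd_diff hpd_rmul hpd_lmul sm_h0 sM)
  have hB1: "hpd B y (axis k 1) (- ((1/2) *\<^sub>R (LMk k y + E \<odot> LMk k y \<odot> E)))" for y k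
    unfolding B_def[abs_def] LMk_def by (intro hpd_minus hpd_scaleR hpd_add hpd_rmul hpd_lmul hpd_LA sM)
  have dA: "dy k A y = dy k M y - E \<odot> dy k M y \<odot> E" for y k
    unfolding dy_def[of k A] by (rule hpd_pd[OF hA1])
  have dB: "dy k B y = - ((1/2) *\<^sub>R (LMk k y + E \<odot> LMk k y \<odot> E))" for y k
    unfolding dy_def[of k B] by (rule hpd_pd[OF hB1])
  have hA: "hpd A y (axis k 1) (dy k A y)" for y k
    unfolding dy_def by (rule hpd_self[OF hA1])
  have hB: "hpd B y (axis k 1) (dy k B y)" for y k
    unfolding dy_def by (rule hpd_self[OF hB1])
  have main: "B y + B y + left_dirac_y A y = 0 \<and> left_dirac_y B y = 0 \<and>
      A y + E \<odot> A y \<odot> E + right_dirac_y A y = 0 \<and> B y - E \<odot> B y \<odot> E + right_dirac_y B y = 0" for y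
  proof -
    define D where "D k l = dy k (dy l M) y" for k l
    have Ds: "D k l = D l k" for k l unfolding D_def by (rule sm_sym[OF sM])
    have J: "(\<Sum>l\<in>UNIV. D k l \<odot> gen (Some l)) = 0" for k
    proof (rule hpd_zero)
      show "hpd (right_dirac_y M) y (axis k 1) (\<Sum>l\<in>UNIV. D k l \<odot> gen (Some l))"
        unfolding D_def by (rule hpd_RA[OF sM])
      show "\<And>z. right_dirac_y M z = 0" using RM by simp
    qed
    have "(\<Sum>k\<in>UNIV. (\<Sum>l\<in>UNIV. D k l \<odot> gen (Some l)) \<odot> gen (Some k)) = 0"
      using J by (simp add: clmul_zero_left)
    then have "(\<Sum>k\<in>UNIV. \<Sum>l\<in>UNIV. D k l \<odot> (gen (Some l) \<odot> gen (Some k))) = 0"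
      by (simp add: clmul_sum_left clmul_assoc)
    then have Lap: "(\<Sum>k\<in>UNIV. D k k) = 0" using symsum_right[of D, OF Ds] by simp
    define Y where "Y = (\<Sum>k\<in>UNIV. \<Sum>l\<in>UNIV. gen (Some k) \<odot> (gen (Some l) \<odot> D k l))"
    have Y0: "Y = 0" unfolding Y_def symsum_left[of D, OF Ds] Lap by simp
    define Z where "Z = (\<Sum>k\<in>UNIV. \<Sum>l\<in>UNIV. gen (Some l) \<odot> (D k l \<odot> gen (Some k)))"
    have "Z = (\<Sum>l\<in>UNIV. gen (Some l) \<odot> (\<Sum>k\<in>UNIV. D l k \<odot> gen (Some k)))"
      unfolding Z_def by (subst sum.swap) (simp add: clmul_sum_right Ds)
    then have Z0: "Z = 0" using J by (simp add: clmul_zero_right)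
    have LA: "left_dirac_y A y = left_dirac_y M y + E \<odot> (left_dirac_y M y \<odot> E)"
      unfolding left_dirac_y_def dA by (simp add: clmul_lin clmul_assoc sum.distrib sum_subtractf)
    have LB: "left_dirac_y B y = - ((1/2) *\<^sub>R (Y - E \<odot> (Y \<odot> E)))"
      unfolding left_dirac_y_def dB Y_def LMk_def D_def
      by (simp add: clmul_lin clmul_assoc sum.distrib sum_subtractf scaleR_sum_right sum_negf scaleR_diff_right)
    have RA: "right_dirac_y A y = right_dirac_y M y + E \<odot> (right_dirac_y M y \<odot> E)"
      unfolding right_dirac_y_def dA by (simp add: clmul_lin clmul_assoc sum.distrib sum_subtractf Eg)
    have RB: "right_dirac_y B y = - ((1/2) *\<^sub>R (Z - E \<odot> (Z \<odot> E)))"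
      unfolding right_dirac_y_def dB Z_def LMk_def D_def
      by (simp add: clmul_lin clmul_assoc sum.distrib sum_subtractf scaleR_sum_right sum_negf Eg scaleR_diff_right)
    have 1: "B y + B y + left_dirac_y A y = 0"
      unfolding B_def half_half LA by (simp add: clmul_assoc)
    have 2: "left_dirac_y B y = 0" unfolding LB Y0 by (simp add: clmul_lin)
    have 3: "A y + E \<odot> A y \<odot> E + right_dirac_y A y = 0"
      unfolding RA RM[rule_format] A_def by (simp add: clmul_lin clmul_assoc gen_sq)
    have 4: "B y - E \<odot> B y \<odot> E + right_dirac_y B y = 0"
      unfolding RB Z0 B_def by (simp add: clmul_lin clmul_assoc gen_sq)
    show ?thesis using 1 2 3 4 by blast
  qed
  show ?thesis unfolding Feq two_sided_monogenic_def
  proof (intro conjI allI)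
    fix p :: "real \<times> real \<times> (real, 'k) vec"
    obtain x0 x1 y where p: "p = (x0, x1, y)" by (cases p) auto
    show "left_dirac (\<lambda>(x0, x1, y). exp_z x0 x1 \<odot> A y + exp_zbar x0 x1 \<odot> B y) p = 0"
      unfolding p core_left[OF hA hB] using main[of y] by (simp add: clmul_lin)
    show "right_dirac (\<lambda>(x0, x1, y). exp_z x0 x1 \<odot> A y + exp_zbar x0 x1 \<odot> B y) p = 0"
      unfolding p core_right[OF hA hB] using main[of y] by (simp add: clmul_lin)
  qed
qed


theorem theorem1:
  fixes dummy :: "'k::{finite,linorder} itself"
  shows "(\<forall>(A :: (real, 'k) vec \<Rightarrow> 'k clif) (B :: (real, 'k) vec \<Rightarrow> 'k clif).
            smooth A \<longrightarrow> smooth B \<longrightarrow>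
            (two_sided_monogenic (\<lambda>(x0, x1, y). exp_z x0 x1 \<odot> A y + exp_zbar x0 x1 \<odot> B y)
             \<longleftrightarrow> (harmonic A
                  \<and> (\<forall>y. A y + gen None \<odot> A y \<odot> gen None + right_dirac_y A y = 0)
                  \<and> (\<forall>y. left_dirac_y B y = 0)
                  \<and> (\<forall>y. B y = - ((1/2) *\<^sub>R left_dirac_y A y)))))
       \<and> (\<forall>M :: (real, 'k) vec \<Rightarrow> 'k clif.
            smooth M \<longrightarrow> (\<forall>y. right_dirac_y M y = 0) \<longrightarrow>
            two_sided_monogenic (\<lambda>(x0, x1, y).
               exp_z x0 x1 \<odot> (M y - gen None \<odot> M y \<odot> gen None)
               - (1/2) *\<^sub>R (exp_zbar x0 x1 \<odot>
                   (left_dirac_y M y + gen None \<odot> left_dirac_y M y \<odot> gen None))))"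
  proof (intro conjI allI impI)
  fix A B :: "(real, 'k) vec \<Rightarrow> 'k clif"
  assume sA: "smooth A" and sB: "smooth B"
  show "two_sided_monogenic (\<lambda>(x0, x1, y). exp_z x0 x1 \<odot> A y + exp_zbar x0 x1 \<odot> B y)
             \<longleftrightarrow> (harmonic A
                  \<and> (\<forall>y. A y + gen None \<odot> A y \<odot> gen None + right_dirac_y A y = 0)
                  \<and> (\<forall>y. left_dirac_y B y = 0)
                  \<and> (\<forall>y. B y = - ((1/2) *\<^sub>R left_dirac_y A y)))"
  proof
    assume "two_sided_monogenic (\<lambda>(x0, x1, y). exp_z x0 x1 \<odot> A y + exp_zbar x0 x1 \<odot> B y)"
    then show "harmonic A
                  \<and> (\<forall>y. A y + gen None \<odot> A y \<odot> gen None + right_dirac_y A y = 0)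
                  \<and> (\<forall>y. left_dirac_y B y = 0)
                  \<and> (\<forall>y. B y = - ((1/2) *\<^sub>R left_dirac_y A y))"
      by (rule part1_fwd[OF sA sB])
  next
    assume H: "harmonic A
                  \<and> (\<forall>y. A y + gen None \<odot> A y \<odot> gen None + right_dirac_y A y = 0)
                  \<and> (\<forall>y. left_dirac_y B y = 0)
                  \<and> (\<forall>y. B y = - ((1/2) *\<^sub>R left_dirac_y A y))"
    show "two_sided_monogenic (\<lambda>(x0, x1, y). exp_z x0 x1 \<odot> A y + exp_zbar x0 x1 \<odot> B y)"
      using H by (intro part1_bwd[OF sA sB]) auto
  qed
next
  fix M :: "(real, 'k) vec \<Rightarrow> 'k clif"
  assume "smooth M" "\<forall>y. right_dirac_y M y = 0"
  then show "two_sided_monogenic (\<lambda>(x0, x1, y).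
               exp_z x0 x1 \<odot> (M y - gen None \<odot> M y \<odot> gen None)
               - (1/2) *\<^sub>R (exp_zbar x0 x1 \<odot>
                   (left_dirac_y M y + gen None \<odot> left_dirac_y M y \<odot> gen None)))"
    by (rule part2)
qed

end
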